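(* Let $(X,d)$ be a compact metric space and $f:X\to X$ continuous. If $(x,y)\in X^2$ is a proximal pair for $f$, i.e. $\liminf_{n\to\infty}d(f^n(x),f^n(y))=0$, then every $(z,w)\in\omega((x,y),f\times f)$ lies in $CR(f)^2$ and satisfies $z\sim w$.
   Context: $\omega((x,y),f\times f)$ is the $\omega$-limit set of $(x,y)$ under $f\times f$, i.e. the set of limits of $(f^{n_j}(x),f^{n_j}(y))$ along sequences $n_j\to\infty$. A $\delta$-chain of $f$ is a finite sequence $(x_i)_{i=0}^k$, $k\ge1$, with $d(f(x_i),x_{i+1})\le\delta$; a $\delta$-cycle is a $\delta$-chain with $x_0=x_k$. $CR(f)$ is the set of points $x$ such that for every $\delta>0$ there is a $\delta$-cycle starting and ending at $x$. For $x,y\in CR(f)$, $x\sim y$ iff for every $\delta>0$ there are integers $m>0$, $N>0$ such that for every $n\ge N$ there are $\delta$-chains $(x_i)_{i=0}^{mn},(y_i)_{i=0}^{mn}$ in $CR(f)$ with $x_0=y_{mn}=x$, $x_{mn}=y_0=y$. *)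

theory Defs
  imports "HOL-Analysis.Analysis" "HOL-Library.Liminf_Limsup"
begin

definition delta_chain :: "'a set \<Rightarrow> ('a \<Rightarrow> 'a) \<Rightarrow> real \<Rightarrow> (nat \<Rightarrow> 'a::metric_space) \<Rightarrow> nat \<Rightarrow> bool" where
  "delta_chain X f \<delta> xs k \<longleftrightarrow> k \<ge> 1 \<and> (\<forall>i\<le>k. xs i \<in> X) \<and>
     (\<forall>i<k. dist (f (xs i)) (xs (Suc i)) \<le> \<delta>)"

definition CR :: "'a set \<Rightarrow> ('a \<Rightarrow> 'a) \<Rightarrow> 'a::metric_space set" where
  "CR X f = {x \<in> X. \<forall>\<delta>>0. \<exists>xs k. delta_chain X f \<delta> xs k \<and> xs 0 = x \<and> xs k = x}"

definition CR_rel :: "'a set \<Rightarrow> ('a \<Rightarrow> 'a) \<Rightarrow> 'a::metric_space \<Rightarrow> 'a \<Rightarrow> bool" where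
  "CR_rel X f x y \<longleftrightarrow> x \<in> CR X f \<and> y \<in> CR X f \<and>
     (\<forall>\<delta>>0. \<exists>m::nat. m > 0 \<and> (\<exists>N::nat. N > 0 \<and> (\<forall>n\<ge>N.
        \<exists>xs ys. delta_chain X f \<delta> xs (m*n) \<and> delta_chain X f \<delta> ys (m*n) \<and>
          (\<forall>i\<le>m*n. xs i \<in> CR X f \<and> ys i \<in> CR X f) \<and>
          xs 0 = x \<and> ys (m*n) = x \<and> xs (m*n) = y \<and> ys 0 = y)))"

definition omega_limit :: "('b \<Rightarrow> 'b) \<Rightarrow> 'b::topological_space \<Rightarrow> 'b set" where
  "omega_limit g p = {q. \<exists>r. strict_mono r \<and> ((\<lambda>j. (g ^^ r j) p) \<longlongrightarrow> q) sequentially}"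

end

theory Submission
  imports Defs
begin

locale sett =
  fixes X :: "'a::metric_space set" and f :: "'a \<Rightarrow> 'a" and x y :: 'a
  assumes cX: "compact X" and cf: "continuous_on X f" and fX: "f ` X \<subseteq> X"
    and xX: "x \<in> X" and yX: "y \<in> X"
begin

definition P :: "nat \<Rightarrow> 'a \<times> 'a" where "P n = ((f ^^ n) x, (f ^^ n) y)"
definition g :: "'a \<times> 'a \<Rightarrow> 'a \<times> 'a" where "g c = (f (fst c), f (snd c))"
definition Om :: "('a \<times> 'a) set" where
  "Om = {q. \<exists>r. strict_mono r \<and> (\<lambda>j. P (r j)) \<longlonglongrightarrow> q}"

lemma iter_X: "u \<in> X \<Longrightarrow> (f ^^ n) u \<in> X"
  by (induction n) (use fX in auto)

lemma P_in: "P n \<in> X \<times> X"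
  using iter_X xX yX by (simp add: P_def)

lemma P_Suc: "P (Suc n) = g (P n)"
  by (simp add: P_def g_def)

lemma cXX: "compact (X \<times> X)" using cX by (simp add: compact_Times)

lemma Om_sub: "Om \<subseteq> X \<times> X"
proof
  fix q assume "q \<in> Om"
  then obtain r where r: "(\<lambda>j. P (r j)) \<longlonglongrightarrow> q" by (auto simp: Om_def)
  show "q \<in> X \<times> X"
    by (rule closed_sequentially[OF compact_imp_closed[OF cXX] P_in r])
qed

lemma g_cont: "continuous_on (X \<times> X) g"
proof -
  have 1: "continuous_on (X \<times> X) (\<lambda>c. f (fst c))"
    by (rule continuous_on_compose2[OF cf continuous_on_fst[OF continuous_on_id]]) auto
  have 2: "continuous_on (X \<times> X) (\<lambda>c. f (snd c))"
    by (rule continuous_on_compose2[OF cf continuous_on_snd[OF continuous_on_id]]) auto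
  show ?thesis unfolding g_def using continuous_on_Pair[OF 1 2] .
qed

lemma g_uc: "uniformly_continuous_on (X \<times> X) g"
  using compact_uniformly_continuous[OF g_cont cXX] .

lemma near: assumes "e > 0" shows "\<exists>T. \<forall>n\<ge>T. \<exists>c\<in>Om. dist c (P n) < e"
proof (rule ccontr)
  assume "\<not> ?thesis"
  then have "\<forall>T. \<exists>n\<ge>T. \<forall>c\<in>Om. e \<le> dist c (P n)" by (auto simp: not_less)
  then have inf: "infinite {n. \<forall>c\<in>Om. e \<le> dist c (P n)}"
    by (simp add: infinite_nat_iff_unbounded_le)
  obtain r :: "nat \<Rightarrow> nat" where r: "strict_mono r" "\<And>n. r n \<in> {n. \<forall>c\<in>Om. e \<le> dist c (P n)}"
    using infinite_enumerate[OF inf] by blast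
  obtain l s where s: "strict_mono (s::nat\<Rightarrow>nat)" "((\<lambda>n. P (r n)) \<circ> s) \<longlonglongrightarrow> l"
    using seq_compactE[OF compact_imp_seq_compact[OF cXX], of "\<lambda>n. P (r n)"] P_in by metis
  have "l \<in> Om" unfolding Om_def
    using s r(1) by (auto intro!: exI[of _ "r \<circ> s"] strict_mono_o simp: o_def)
  then have "\<And>n. e \<le> dist l (P (r (s n)))" using r(2) by auto
  moreover have "\<forall>\<^sub>F n in sequentially. dist (P (r (s n))) l < e"
    using s(2) assms unfolding tendsto_iff o_def by blast
  ultimately show False
    by (metis (no_types, lifting) dist_commute eventually_sequentially le_refl not_less)
qed

lemma fstg: "dist (f (fst c)) (fst c') \<le> dist (g c) c'"
  using dist_fst_le[of "g c" c'] by (simp add: g_def)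
lemma sndg: "dist (f (snd c)) (snd c') \<le> dist (g c) c'"
  using dist_snd_le[of "g c" c'] by (simp add: g_def)

lemma Om_freq: assumes "q \<in> Om" "e > 0" shows "\<exists>n\<ge>T. dist (P n) q < e"
proof -
  obtain r where r: "strict_mono r" "(\<lambda>j. P (r j)) \<longlonglongrightarrow> q" using assms(1) by (auto simp: Om_def)
  then have "\<forall>\<^sub>F j in sequentially. dist (P (r j)) q < e" using assms(2) unfolding tendsto_iff by blast
  then obtain J where J: "\<And>j. j \<ge> J \<Longrightarrow> dist (P (r j)) q < e" by (auto simp: eventually_sequentially)
  have "r (max J T) \<ge> T" using seq_suble[OF r(1), of "max J T"] by linarith
  then show ?thesis using J[of "max J T"] by auto
qed

lemma ict: assumes a: "a \<in> Om" and b: "b \<in> Om" and dl: "\<delta> > 0"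
  shows "\<exists>cs k. k \<ge> 1 \<and> cs 0 = a \<and> cs k = b \<and> (\<forall>i\<le>k. cs i \<in> Om) \<and>
     (\<forall>i<k. dist (g (cs i)) (cs (Suc i)) \<le> \<delta>)"
proof -
  have "\<delta>/2 > 0" using dl by simp
  then obtain d where d: "d > 0" "\<And>u v. u \<in> X \<times> X \<Longrightarrow> v \<in> X \<times> X \<Longrightarrow> dist v u < d \<Longrightarrow> dist (g v) (g u) < \<delta>/2"
    using g_uc unfolding uniformly_continuous_on_def by metis
  define e where "e = min d (\<delta>/2)"
  have e: "e > 0" "e \<le> d" "e \<le> \<delta>/2" using d dl by (auto simp: e_def)
  obtain T where T: "\<And>n. n \<ge> T \<Longrightarrow> \<exists>c\<in>Om. dist c (P n) < e" using near[OF e(1)] by blast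
  obtain n1 where n1: "n1 \<ge> T" "dist (P n1) a < e" using Om_freq[OF a e(1)] by blast
  obtain n2 where n2: "n2 \<ge> Suc n1" "dist (P n2) b < e" using Om_freq[OF b e(1)] by blast
  define c where "c n = (SOME c. c \<in> Om \<and> dist c (P n) < e)" for n
  have c: "c n \<in> Om \<and> dist (c n) (P n) < e" if "n \<ge> T" for n
    unfolding c_def using T[OF that] by (metis (mono_tags, lifting) someI_ex)
  define k where "k = n2 - n1"
  define cs where "cs i = (if i = 0 then a else if i = k then b else c (n1 + i))" for i
  have k1: "k \<ge> 1" using n2 by (simp add: k_def)
  have pts: "cs i \<in> Om \<and> dist (cs i) (P (n1 + i)) < e" if "i \<le> k" for i
  proof -
    consider "i = 0" | "i \<noteq> 0" "i = k" | "i \<noteq> 0" "i \<noteq> k" by blast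
    then show ?thesis
    proof cases
      case 1 then show ?thesis using a n1 by (simp add: cs_def dist_commute)
    next
      case 2 then have "n1 + i = n2" using n2 by (simp add: k_def)
      then show ?thesis using 2 b n2 by (simp add: cs_def dist_commute)
    next
      case 3 then show ?thesis using c[of "n1+i"] n1 by (simp add: cs_def)
    qed
  qed
  have step: "dist (g (cs i)) (cs (Suc i)) \<le> \<delta>" if "i < k" for i
  proof -
    have p1: "cs i \<in> Om" "dist (cs i) (P (n1 + i)) < e" using pts[of i] that by auto
    have p2: "dist (cs (Suc i)) (P (n1 + Suc i)) < e" using pts[of "Suc i"] that by auto
    have "cs i \<in> X \<times> X" using p1 Om_sub by blast
    then have "dist (g (cs i)) (g (P (n1 + i))) < \<delta>/2"
      using d(2)[of "P (n1+i)" "cs i"] P_in p1 e by auto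
    moreover have "g (P (n1 + i)) = P (n1 + Suc i)" by (simp add: P_Suc)
    ultimately have "dist (g (cs i)) (P (n1 + Suc i)) < \<delta>/2" by simp
    moreover have "dist (g (cs i)) (cs (Suc i)) \<le> dist (g (cs i)) (P (n1 + Suc i)) + dist (cs (Suc i)) (P (n1 + Suc i))"
      by (simp add: dist_triangle2)
    ultimately show ?thesis using p2 e by linarith
  qed
  show ?thesis
    apply (rule exI[of _ cs], rule exI[of _ k])
    using k1 step pts by (auto simp: cs_def)
qed

lemma Om_CR: assumes "q \<in> Om" shows "fst q \<in> CR X f \<and> snd q \<in> CR X f"
proof -
  have qX: "fst q \<in> X" "snd q \<in> X" using assms Om_sub by auto
  have "\<exists>xs k. delta_chain X f \<delta> xs k \<and> xs 0 = fst q \<and> xs k = fst q"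
    "\<exists>xs k. delta_chain X f \<delta> xs k \<and> xs 0 = snd q \<and> xs k = snd q" if dl: "\<delta> > 0" for \<delta>
  proof -
    obtain cs k where cs: "k \<ge> 1" "cs 0 = q" "cs k = q" "\<forall>i\<le>k. cs i \<in> Om"
       "\<forall>i<k. dist (g (cs i)) (cs (Suc i)) \<le> \<delta>" using ict[OF assms assms dl] by blast
    have inX: "\<forall>i\<le>k. fst (cs i) \<in> X \<and> snd (cs i) \<in> X" using cs(4) Om_sub by auto
    show "\<exists>xs k. delta_chain X f \<delta> xs k \<and> xs 0 = fst q \<and> xs k = fst q"
      apply (rule exI[of _ "\<lambda>i. fst (cs i)"], rule exI[of _ k])
      using cs(1,2,3) inX order_trans[OF fstg] cs(5) unfolding delta_chain_def by (metis less_imp_le_nat)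
    show "\<exists>xs k. delta_chain X f \<delta> xs k \<and> xs 0 = snd q \<and> xs k = snd q"
      apply (rule exI[of _ "\<lambda>i. snd (cs i)"], rule exI[of _ k])
      using cs(1,2,3) inX order_trans[OF sndg] cs(5) unfolding delta_chain_def by (metis less_imp_le_nat)
  qed
  then show ?thesis using qX by (auto simp: CR_def)
qed

lemma diag: assumes lim: "liminf (\<lambda>n. ereal (dist ((f ^^ n) x) ((f ^^ n) y))) = 0"
  shows "\<exists>p. (p, p) \<in> Om"
proof -
  define D where "D n = dist (fst (P n)) (snd (P n))" for n
  have freq: "\<exists>n\<ge>T. D n < \<epsilon>" if "\<epsilon> > 0" for \<epsilon> T
  proof (rule ccontr)
    assume "\<not> ?thesis"
    then have "\<forall>\<^sub>F n in sequentially. ereal \<epsilon> \<le> ereal (dist ((f ^^ n) x) ((f ^^ n) y))"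
      by (auto simp: eventually_sequentially D_def P_def not_less)
    then have "ereal \<epsilon> \<le> 0" using Liminf_bounded lim by metis
    then show False using that by simp
  qed
  have "\<exists>r. \<forall>k. D (r k) < inverse (real (Suc k)) \<and> r k < r (Suc k)"
    apply (rule dependent_nat_choice[where P="\<lambda>k n. D n < inverse (real (Suc k))" and Q="\<lambda>k n n'. n < n'"])
    subgoal using freq[of 1 0] by auto
    subgoal for n k using freq[of "inverse (real (Suc (Suc k)))" "Suc n"] by auto
    done
  then obtain r where r: "\<And>k. D (r k) < inverse (real (Suc k))" "\<And>k. r k < r (Suc k)" by blast
  have sm: "strict_mono r" using r(2) by (simp add: strict_mono_Suc_iff)
  have D0: "(\<lambda>k. D (r k)) \<longlonglongrightarrow> 0"
    apply (rule tendsto_sandwich[of "\<lambda>_. 0" _ _ "\<lambda>k. inverse (real (Suc k))"])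
    using r(1) LIMSEQ_inverse_real_of_nat by (auto intro!: always_eventually less_imp_le simp: D_def)
  obtain l s where s: "strict_mono (s::nat\<Rightarrow>nat)" "((\<lambda>n. P (r n)) \<circ> s) \<longlonglongrightarrow> l"
    using seq_compactE[OF compact_imp_seq_compact[OF cXX], of "\<lambda>n. P (r n)"] P_in by metis
  have "(\<lambda>k. D (r (s k))) \<longlonglongrightarrow> dist (fst l) (snd l)"
    unfolding D_def using s(2) by (intro tendsto_dist tendsto_fst tendsto_snd) (auto simp: o_def)
  moreover have "(\<lambda>k. D (r (s k))) \<longlonglongrightarrow> 0"
    using LIMSEQ_subseq_LIMSEQ[OF D0 s(1)] by (simp add: o_def)
  ultimately have "dist (fst l) (snd l) = 0" using LIMSEQ_unique by blast
  then have "l = (fst l, fst l)" by (metis dist_eq_0_iff prod.collapse)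
  moreover have "l \<in> Om" unfolding Om_def
    using s sm by (auto intro!: exI[of _ "r \<circ> s"] strict_mono_o simp: o_def)
  ultimately show ?thesis by metis
qed

lemma main: assumes zw: "(z, w) \<in> Om" and pp: "(p, p) \<in> Om"
  shows "CR_rel X f z w"
proof -
  have zwCR: "z \<in> CR X f" "w \<in> CR X f" using Om_CR[OF zw] by auto
  have "\<exists>m::nat. m > 0 \<and> (\<exists>N::nat. N > 0 \<and> (\<forall>n\<ge>N.
        \<exists>xs ys. delta_chain X f \<delta> xs (m*n) \<and> delta_chain X f \<delta> ys (m*n) \<and>
          (\<forall>i\<le>m*n. xs i \<in> CR X f \<and> ys i \<in> CR X f) \<and>
          xs 0 = z \<and> ys (m*n) = z \<and> xs (m*n) = w \<and> ys 0 = w))" if dl: "\<delta> > 0" for \<delta>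
  proof -
    obtain A L1 where A: "L1 \<ge> 1" "A 0 = (z, w)" "A L1 = (p, p)" "\<forall>i\<le>L1. A i \<in> Om"
       "\<forall>i<L1. dist (g (A i)) (A (Suc i)) \<le> \<delta>" using ict[OF zw pp dl] by blast
    obtain B L2 where B: "L2 \<ge> 1" "B 0 = (p, p)" "B L2 = (z, w)" "\<forall>i\<le>L2. B i \<in> Om"
       "\<forall>i<L2. dist (g (B i)) (B (Suc i)) \<le> \<delta>" using ict[OF pp zw dl] by blast
    define L where "L = L1 + L2"
    define C where "C i = (if i \<le> L1 then A i else B (i - L1))" for i
    have C0: "C 0 = (z, w)" and CL1: "C L1 = (p, p)" and CL: "C L = (z, w)"
      using A B by (auto simp: C_def L_def)
    have COm: "C i \<in> Om" if "i \<le> L" for i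
      using A B that by (auto simp: C_def L_def)
    have Cstep: "dist (g (C i)) (C (Suc i)) \<le> \<delta>" if "i < L" for i
    proof (cases "i < L1")
      case True then show ?thesis using A by (auto simp: C_def)
    next
      case False
      then have "C i = B (i - L1)" using A B by (cases "i = L1") (auto simp: C_def)
      moreover have "C (Suc i) = B (Suc (i - L1))" using False by (auto simp: C_def Suc_diff_le)
      moreover have "i - L1 < L2" using that False by (simp add: L_def)
      ultimately show ?thesis using B by auto
    qed
    have Lpos: "L > 0" and L1L: "L1 < L" using A B by (auto simp: L_def)
    define E where "E i = C (i mod L)" for i
    have EOm: "E i \<in> Om" for i using COm Lpos by (simp add: E_def less_imp_le)
    have ESuc: "E (Suc i) = C (Suc (i mod L))" for i
      using CL C0 by (auto simp: E_def mod_Suc)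
    have Estep: "dist (g (E i)) (E (Suc i)) \<le> \<delta>" for i
    proof -
      have h: "dist (g (C (i mod L))) (C (Suc (i mod L))) \<le> \<delta>" using Cstep Lpos by simp
      show ?thesis unfolding ESuc using h by (simp only: E_def)
    qed
    have Ef: "dist (f (fst (E i))) (fst (E (Suc i))) \<le> \<delta>" for i
      using order_trans[OF fstg Estep] .
    have Es: "dist (f (snd (E i))) (snd (E (Suc i))) \<le> \<delta>" for i
      using order_trans[OF sndg Estep] .
    have EX: "fst (E i) \<in> X \<and> snd (E i) \<in> X \<and> fst (E i) \<in> CR X f \<and> snd (E i) \<in> CR X f" for i
      using EOm[of i] Om_sub Om_CR by auto
    have key: "\<exists>xs ys. delta_chain X f \<delta> xs (L*n) \<and> delta_chain X f \<delta> ys (L*n) \<and>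
          (\<forall>i\<le>L*n. xs i \<in> CR X f \<and> ys i \<in> CR X f) \<and>
          xs 0 = z \<and> ys (L*n) = z \<and> xs (L*n) = w \<and> ys 0 = w" if n: "1 \<le> n" for n
    proof -
      define t where "t = (n - 1) * L + L1"
      have tlt: "t < L * n" using n L1L by (cases n) (auto simp: t_def algebra_simps)
      have Et: "E t = (p, p)" using CL1 L1L by (simp add: E_def t_def)
      have En: "E (L * n) = (z, w)" using C0 by (simp add: E_def)
      define xs where "xs i = (if i \<le> t then fst (E i) else snd (E i))" for i
      define ys where "ys i = (if i \<le> t then snd (E i) else fst (E i))" for i
      have xstep: "dist (f (xs i)) (xs (Suc i)) \<le> \<delta>" for i
      proof -
        consider "i < t" | "i = t" | "i > t" by linarith
        then show ?thesis
        proof cases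
          case 1 then show ?thesis using Ef[of i] by (simp add: xs_def)
        next
          case 2 then show ?thesis using Es[of i] Et by (simp add: xs_def)
        next
          case 3 then show ?thesis using Es[of i] by (simp add: xs_def)
        qed
      qed
      have ystep: "dist (f (ys i)) (ys (Suc i)) \<le> \<delta>" for i
      proof -
        consider "i < t" | "i = t" | "i > t" by linarith
        then show ?thesis
        proof cases
          case 1 then show ?thesis using Es[of i] by (simp add: ys_def)
        next
          case 2 then show ?thesis using Ef[of i] Et by (simp add: ys_def)
        next
          case 3 then show ?thesis using Ef[of i] by (simp add: ys_def)
        qed
      qed
      have Ln1: "L * n \<ge> 1" using n Lpos by simp
      show "\<exists>xs ys. delta_chain X f \<delta> xs (L*n) \<and> delta_chain X f \<delta> ys (L*n) \<and>
          (\<forall>i\<le>L*n. xs i \<in> CR X f \<and> ys i \<in> CR X f) \<and>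
          xs 0 = z \<and> ys (L*n) = z \<and> xs (L*n) = w \<and> ys 0 = w"
      proof (intro exI conjI)
        have xsX: "xs i \<in> X \<and> xs i \<in> CR X f" for i using EX[of i] by (simp add: xs_def)
        have ysX: "ys i \<in> X \<and> ys i \<in> CR X f" for i using EX[of i] by (simp add: ys_def)
        show "delta_chain X f \<delta> xs (L*n)" unfolding delta_chain_def using Ln1 xsX xstep by blast
        show "delta_chain X f \<delta> ys (L*n)" unfolding delta_chain_def using Ln1 ysX ystep by blast
        show "\<forall>i\<le>L*n. xs i \<in> CR X f \<and> ys i \<in> CR X f" using xsX ysX by blast
        show "xs 0 = z" using C0 by (simp add: xs_def E_def)
        show "ys 0 = w" using C0 by (simp add: ys_def E_def)
        show "xs (L*n) = w" using En tlt by (simp add: xs_def)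
        show "ys (L*n) = z" using En tlt by (simp add: ys_def)
      qed
    qed
    show ?thesis
      apply (rule exI[of _ L])
      apply (rule conjI[OF Lpos])
      apply (rule exI[of _ "1::nat"])
      using key by auto
  qed
  then show ?thesis using zwCR by (simp add: CR_rel_def)
qed

lemma iter_pair: "((\<lambda>(a, b). (f a, f b)) ^^ n) (x, y) = P n"
  by (induction n) (auto simp: P_def)

end

theorem lemmaA1:
  fixes X :: "'a::metric_space set" and f :: "'a \<Rightarrow> 'a" and x y z w :: 'a
  assumes "compact X" and "continuous_on X f" and "f ` X \<subseteq> X"
    and "x \<in> X" and "y \<in> X"
    and "liminf (\<lambda>n. ereal (dist ((f ^^ n) x) ((f ^^ n) y))) = 0"
    and "(z, w) \<in> omega_limit (\<lambda>(a, b). (f a, f b)) (x, y)"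
  shows "z \<in> CR X f \<and> w \<in> CR X f \<and> CR_rel X f z w"
proof -
  interpret sett X f x y using assms(1-5) by unfold_locales
  have zw: "(z, w) \<in> Om" using assms(7) by (simp add: omega_limit_def Om_def iter_pair)
  obtain p where "(p, p) \<in> Om" using diag[OF assms(6)] by blast
  then show ?thesis using main[OF zw] Om_CR[OF zw] by auto
qed

end
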